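(* Suppose $\mathcal U$ is quasiconvex and strongly stable with parameters $a,b,q$, and that $\Delta_i>0$ for all $i\ne i^*$. Let $L=b\bigl(1+\max_{i,j\in\mathbb K}\|F^{(i)}-F^{(j)}\|^{q-1}\bigr)$ and $\alpha>2$. Then the $\mathcal U$-UCB policy $\pi$ with parameter $\alpha$ satisfies, for every $T\ge 1$, $$\tilde{\mathcal R}(\pi,T)\le\frac LT\sum_{i\ne i^*}\Bigl(\frac{\alpha\log T}{\phi(\Delta_i/2)}+\frac{\alpha+6}{\alpha-2}\Bigr)\|F^{(i^* )}-F^{(i)}\|.$$
   Context: Bandit setting: $K\ge1$, $\mathbb K=\{1,\dots,K\}$; arm $i$ produces i.i.d. rewards $X^{(i)}_1,X^{(i)}_2,\dots$ with distribution function $F^{(i)}$, all rewards mutually independent. An admissible policy $\pi=(\pi_1,\pi_2,\dots)$ chooses $\pi_t\in\mathbb K$ as a measurable function of an independent randomization variable and past actions/rewards; $\tau_i(t)=\sum_{s\le t}\mathbf 1\{\pi_s=i\}$, and the reward at time $t$ is $X^{(i)}_{\tau_i(t)}$ on $\{\pi_t=i\}$. Empirical distribution functions: $\hat F_t(x_1,\dots,x_t;y)=\frac1t\sum_{s\le t}\mathbf 1\{x_s\le y\}$, $\hat F^{(i)}_t=\hat F_t(X^{(i)}_1,\dots,X^{(i)}_t;\cdot)$; $\hat{\mathcal D}$ is the set of all empirical distribution functions of finite real sequences. $\Delta_{K-1}$ is the probability simplex, $F_p=\sum_ip_iF^{(i)}$, $\mathcal D^\Delta=\{F_p:p\in\Delta_{K-1}\}$.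 $(L,\|\cdot\|)$ is a Banach space of bounded functions on $\mathbb R$ containing $\mathcal D^\Delta\cup\hat{\mathcal D}$, and $\mathcal U:L\to\mathbb R$. Quasiconvex: $\mathcal U(\lambda F+(1-\lambda)G)\le\max\{\mathcal U(F),\mathcal U(G)\}$. Strongly stable: (1) there exist $b>0,q\ge1$ with $|\mathcal U(F)-\mathcal U(G)|\le b(\|F-G\|+\|F-G\|^q)$ for all $F\in\mathcal D^\Delta$, $G\in\mathcal D^\Delta\cup\hat{\mathcal D}$; (2) there is $a>0$ with $\mathbb P(\|\hat F^{(i)}_t-F^{(i)}\|\ge x)\le2\exp(-atx^2)$ for all $i$, $x>0$, $t\ge1$. Let $p^*\in\arg\max_{p\in\Delta_{K-1}}\mathcal U(F_p)$, $\Delta_i=\mathcal U(F_{p^*})-\mathcal U(F^{(i)})$, $i^*\in\arg\min_i\Delta_i$. Proxy distribution $\tilde F^\pi_T=\frac1T\sum_i\tau_i(T)F^{(i)}$ and proxy regret $\tilde{\mathcal R}(\pi,T)=\mathbb E[\mathcal U(F_{p^*})-\mathcal U(\tilde F^\pi_T)]$. Define $\phi(y)=\min\{a(\frac{y}{2b})^2,a(\frac{y}{2b})^{2/q}\}$ and $\phi^{-1}(x)=\max\{2b(\frac xa)^{1/2},2b(\frac xa)^{q/2}\}$. The $\mathcal U$-UCB policy with parameter $\alpha$ pulls each arm once at times $t=1,\dots,K$, and for $t\ge K+1$ chooses $\pi_t\in\arg\max_{i\in\mathbb K}\bigl[\mathcal U(\hat F^{(i)}_{\tau_i(t-1)})+\phi^{-1}\bigl(\frac{\alpha\log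 t}{\tau_i(t-1)}\bigr)\bigr]$. *)

theory Defs
  imports "HOL-Probability.Probability"
begin

text \<open>Arms are indexed by {1..K}; samples of each arm are indexed from 1.\<close>

definition emp_cdf :: "real list \<Rightarrow> real \<Rightarrow> real" where
  "emp_cdf xs y = (\<Sum>s<length xs. if xs ! s \<le> y then 1 else 0) / real (length xs)"

definition emp_cdfs :: "(real \<Rightarrow> real) set" where
  "emp_cdfs = {emp_cdf xs | xs. xs \<noteq> []}"

definition emp_arm :: "(nat \<Rightarrow> nat \<Rightarrow> 'a \<Rightarrow> real) \<Rightarrow> nat \<Rightarrow> nat \<Rightarrow> 'a \<Rightarrow> real \<Rightarrow> real" where
  "emp_arm X i t \<omega> = emp_cdf (map (\<lambda>s. X i s \<omega>) [1..<t+1])"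

definition prob_simplex :: "nat \<Rightarrow> (nat \<Rightarrow> real) set" where
  "prob_simplex K = {p. (\<forall>i\<in>{1..K}. 0 \<le> p i) \<and> (\<Sum>i=1..K. p i) = 1}"

definition mix :: "nat \<Rightarrow> (nat \<Rightarrow> real \<Rightarrow> real) \<Rightarrow> (nat \<Rightarrow> real) \<Rightarrow> real \<Rightarrow> real" where
  "mix K F p = (\<lambda>y. \<Sum>i=1..K. p i * F i y)"

definition mixtures :: "nat \<Rightarrow> (nat \<Rightarrow> real \<Rightarrow> real) \<Rightarrow> (real \<Rightarrow> real) set" where
  "mixtures K F = mix K F ` prob_simplex K"

definition banach_bounded_fns :: "(real \<Rightarrow> real) set \<Rightarrow> ((real \<Rightarrow> real) \<Rightarrow> real) \<Rightarrow> bool" where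
  "banach_bounded_fns L N \<longleftrightarrow>
     (\<lambda>y. 0) \<in> L \<and>
     (\<forall>f\<in>L. \<forall>g\<in>L. (\<lambda>y. f y + g y) \<in> L) \<and>
     (\<forall>c. \<forall>f\<in>L. (\<lambda>y. c * f y) \<in> L) \<and>
     (\<forall>f\<in>L. bounded (range f)) \<and>
     (\<forall>f\<in>L. N f = 0 \<longleftrightarrow> f = (\<lambda>y. 0)) \<and>
     (\<forall>f\<in>L. \<forall>g\<in>L. N (\<lambda>y. f y + g y) \<le> N f + N g) \<and>
     (\<forall>c. \<forall>f\<in>L. N (\<lambda>y. c * f y) = \<bar>c\<bar> * N f) \<and>
     (\<forall>s. (\<forall>n. s n \<in> L) \<and> (\<forall>e>0. \<exists>m0. \<forall>m\<ge>m0. \<forall>n\<ge>m0. N (\<lambda>y. s m y - s n y) < e)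
          \<longrightarrow> (\<exists>g\<in>L. (\<lambda>n. N (\<lambda>y. s n y - g y)) \<longlonglongrightarrow> 0))"

definition quasiconvex_on :: "(real \<Rightarrow> real) set \<Rightarrow> ((real \<Rightarrow> real) \<Rightarrow> real) \<Rightarrow> bool" where
  "quasiconvex_on L U \<longleftrightarrow>
     (\<forall>F\<in>L. \<forall>G\<in>L. \<forall>l\<in>{0..1::real}. U (\<lambda>y. l * F y + (1 - l) * G y) \<le> max (U F) (U G))"

text \<open>Strong stability with parameters a, b, q.  The probability in (2) is understood
  as the probability of an event (the set is required to be measurable).\<close>
definition strongly_stable ::
  "'a measure \<Rightarrow> nat \<Rightarrow> (nat \<Rightarrow> nat \<Rightarrow> 'a \<Rightarrow> real) \<Rightarrow> (nat \<Rightarrow> real \<Rightarrow> real)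
   \<Rightarrow> ((real \<Rightarrow> real) \<Rightarrow> real) \<Rightarrow> ((real \<Rightarrow> real) \<Rightarrow> real) \<Rightarrow> real \<Rightarrow> real \<Rightarrow> real \<Rightarrow> bool" where
  "strongly_stable M K X F N U a b q \<longleftrightarrow>
     b > 0 \<and> q \<ge> 1 \<and>
     (\<forall>F'\<in>mixtures K F. \<forall>G\<in>mixtures K F \<union> emp_cdfs.
        \<bar>U F' - U G\<bar> \<le> b * (N (\<lambda>y. F' y - G y) + N (\<lambda>y. F' y - G y) powr q)) \<and>
     a > 0 \<and>
     (\<forall>i\<in>{1..K}. \<forall>x>0. \<forall>t\<ge>1.
        {\<omega>\<in>space M. N (\<lambda>y. emp_arm X i t \<omega> y - F i y) \<ge> x} \<in> sets M \<and>
        measure M {\<omega>\<in>space M. N (\<lambda>y. emp_arm X i t \<omega> y - F i y) \<ge> x}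
          \<le> 2 * exp (- a * real t * x\<^sup>2))"

text \<open>Probability space M, rewards X i s (arm i in {1..K}, sample s >= 1), randomization Z;
  all mutually independent; each arm i.i.d.; F i is the distribution function of arm i.\<close>
definition bandit_model ::
  "'a measure \<Rightarrow> nat \<Rightarrow> (nat \<Rightarrow> nat \<Rightarrow> 'a \<Rightarrow> real) \<Rightarrow> ('a \<Rightarrow> real) \<Rightarrow> (nat \<Rightarrow> real \<Rightarrow> real) \<Rightarrow> bool" where
  "bandit_model M K X Z F \<longleftrightarrow>
     prob_space M \<and> K \<ge> 1 \<and>
     Z \<in> borel_measurable M \<and>
     (\<forall>i\<in>{1..K}. \<forall>s\<ge>1. X i s \<in> borel_measurable M) \<and>
     prob_space.indep_vars M (\<lambda>_. borel)
        (\<lambda>k. case k of None \<Rightarrow> Z | Some (i, s) \<Rightarrow> X i s)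
        (insert None (Some ` ({1..K} \<times> {1..}))) \<and>
     (\<forall>i\<in>{1..K}. \<forall>s\<ge>1. distr M borel (X i s) = distr M borel (X i 1)) \<and>
     (\<forall>i\<in>{1..K}. F i = cdf (distr M borel (X i 1)))"

definition pulls :: "(nat \<Rightarrow> 'a \<Rightarrow> nat) \<Rightarrow> nat \<Rightarrow> nat \<Rightarrow> 'a \<Rightarrow> nat" where
  "pulls pol i t \<omega> = card {s\<in>{1..t}. pol s \<omega> = i}"

definition reward :: "(nat \<Rightarrow> 'a \<Rightarrow> nat) \<Rightarrow> (nat \<Rightarrow> nat \<Rightarrow> 'a \<Rightarrow> real) \<Rightarrow> nat \<Rightarrow> 'a \<Rightarrow> real" where
  "reward pol X t \<omega> = X (pol t \<omega>) (pulls pol (pol t \<omega>) t \<omega>) \<omega>"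

definition hist_sets ::
  "'a measure \<Rightarrow> ('a \<Rightarrow> real) \<Rightarrow> (nat \<Rightarrow> 'a \<Rightarrow> nat) \<Rightarrow> (nat \<Rightarrow> nat \<Rightarrow> 'a \<Rightarrow> real) \<Rightarrow> nat \<Rightarrow> 'a set set" where
  "hist_sets M Z pol X t = sigma_sets (space M)
     ({Z -` A \<inter> space M | A. A \<in> sets borel} \<union>
      {pol s -` A \<inter> space M | s A. 1 \<le> s \<and> s < t} \<union>
      {reward pol X s -` B \<inter> space M | s B. 1 \<le> s \<and> s < t \<and> B \<in> sets borel})"

definition admissible_policy ::
  "'a measure \<Rightarrow> nat \<Rightarrow> (nat \<Rightarrow> nat \<Rightarrow> 'a \<Rightarrow> real) \<Rightarrow> ('a \<Rightarrow> real) \<Rightarrow> (nat \<Rightarrow> 'a \<Rightarrow> nat) \<Rightarrow> bool" where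
  "admissible_policy M K X Z pol \<longleftrightarrow>
     (\<forall>t\<ge>1. (\<forall>\<omega>\<in>space M. pol t \<omega> \<in> {1..K}) \<and>
            (\<forall>i. {\<omega>\<in>space M. pol t \<omega> = i} \<in> hist_sets M Z pol X t))"

definition phi :: "real \<Rightarrow> real \<Rightarrow> real \<Rightarrow> real \<Rightarrow> real" where
  "phi a b q y = min (a * (y / (2 * b))\<^sup>2) (a * (y / (2 * b)) powr (2 / q))"

definition phi_inv :: "real \<Rightarrow> real \<Rightarrow> real \<Rightarrow> real \<Rightarrow> real" where
  "phi_inv a b q x = max (2 * b * (x / a) powr (1 / 2)) (2 * b * (x / a) powr (q / 2))"

definition ucb_index ::
  "((real \<Rightarrow> real) \<Rightarrow> real) \<Rightarrow> (nat \<Rightarrow> nat \<Rightarrow> 'a \<Rightarrow> real) \<Rightarrow> real \<Rightarrow> real \<Rightarrow> real \<Rightarrow> real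
   \<Rightarrow> (nat \<Rightarrow> 'a \<Rightarrow> nat) \<Rightarrow> nat \<Rightarrow> nat \<Rightarrow> 'a \<Rightarrow> real" where
  "ucb_index U X a b q \<alpha> pol i t \<omega> =
     U (emp_arm X i (pulls pol i (t - 1) \<omega>) \<omega>)
     + phi_inv a b q (\<alpha> * ln (real t) / real (pulls pol i (t - 1) \<omega>))"

text \<open>pol follows the U-UCB rule (with arbitrary tie-breaking among maximizers).\<close>
definition ucb_policy ::
  "'a measure \<Rightarrow> nat \<Rightarrow> (nat \<Rightarrow> nat \<Rightarrow> 'a \<Rightarrow> real) \<Rightarrow> ((real \<Rightarrow> real) \<Rightarrow> real)
   \<Rightarrow> real \<Rightarrow> real \<Rightarrow> real \<Rightarrow> real \<Rightarrow> (nat \<Rightarrow> 'a \<Rightarrow> nat) \<Rightarrow> bool" where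
  "ucb_policy M K X U a b q \<alpha> pol \<longleftrightarrow>
     (\<forall>\<omega>\<in>space M.
        (\<forall>t\<in>{1..K}. pol t \<omega> = t) \<and>
        (\<forall>t\<ge>K+1. pol t \<omega> \<in> {1..K} \<and>
           (\<forall>j\<in>{1..K}. ucb_index U X a b q \<alpha> pol j t \<omega> \<le> ucb_index U X a b q \<alpha> pol (pol t \<omega>) t \<omega>)))"

definition gap :: "((real \<Rightarrow> real) \<Rightarrow> real) \<Rightarrow> nat \<Rightarrow> (nat \<Rightarrow> real \<Rightarrow> real) \<Rightarrow> (nat \<Rightarrow> real) \<Rightarrow> nat \<Rightarrow> real" where
  "gap U K F pstar i = U (mix K F pstar) - U (F i)"

definition proxy_dist :: "nat \<Rightarrow> (nat \<Rightarrow> real \<Rightarrow> real) \<Rightarrow> (nat \<Rightarrow> 'a \<Rightarrow> nat) \<Rightarrow> nat \<Rightarrow> 'a \<Rightarrow> real \<Rightarrow> real" where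
  "proxy_dist K F pol T \<omega> = (\<lambda>y. (\<Sum>i=1..K. real (pulls pol i T \<omega>) * F i y) / real T)"

definition proxy_regret ::
  "'a measure \<Rightarrow> nat \<Rightarrow> (nat \<Rightarrow> real \<Rightarrow> real) \<Rightarrow> ((real \<Rightarrow> real) \<Rightarrow> real) \<Rightarrow> (nat \<Rightarrow> real)
   \<Rightarrow> (nat \<Rightarrow> 'a \<Rightarrow> nat) \<Rightarrow> nat \<Rightarrow> real" where
  "proxy_regret M K F U pstar pol T =
     (\<integral>\<omega>. U (mix K F pstar) - U (proxy_dist K F pol T \<omega>) \<partial>M)"

text \<open>x^e for x >= 0, e >= 0 with the convention 0^0 = 1.\<close>
definition rpow :: "real \<Rightarrow> real \<Rightarrow> real" where
  "rpow x e = (if e = 0 then 1 else x powr e)"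

definition lip_const ::
  "nat \<Rightarrow> (nat \<Rightarrow> real \<Rightarrow> real) \<Rightarrow> ((real \<Rightarrow> real) \<Rightarrow> real) \<Rightarrow> real \<Rightarrow> real \<Rightarrow> real" where
  "lip_const K F N b q =
     b * (1 + Max {rpow (N (\<lambda>y. F i y - F j y)) (q - 1) | i j. i \<in> {1..K} \<and> j \<in> {1..K}})"

end

theory Submission
  imports Defs
begin


lemma bb_facts:
  assumes "banach_bounded_fns L N"
  shows "(\<lambda>y. 0) \<in> L" "\<And>f g. f\<in>L \<Longrightarrow> g\<in>L \<Longrightarrow> (\<lambda>y. f y + g y) \<in> L"
    "\<And>c f. f\<in>L \<Longrightarrow> (\<lambda>y. c * f y) \<in> L"
    "\<And>f g. f\<in>L \<Longrightarrow> g\<in>L \<Longrightarrow> N (\<lambda>y. f y + g y) \<le> N f + N g"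
    "\<And>c f. f\<in>L \<Longrightarrow> N (\<lambda>y. c * f y) = \<bar>c\<bar> * N f"
    "N (\<lambda>y. 0) = 0"
  using assms unfolding banach_bounded_fns_def by auto

lemma bb_diff:
  assumes "banach_bounded_fns L N" "f \<in> L" "g \<in> L"
  shows "(\<lambda>y. f y - g y) \<in> L"
proof -
  have "(\<lambda>y. f y + (-1) * g y) \<in> L" using bb_facts[OF assms(1)] assms by blast
  then show ?thesis by simp
qed

lemma bb_nonneg:
  assumes "banach_bounded_fns L N" "f \<in> L"
  shows "N f \<ge> 0"
proof -
  have "(\<lambda>y. (-1) * f y) \<in> L" using bb_facts[OF assms(1)] assms by blast
  have "N (\<lambda>y. f y + (-1) * f y) \<le> N f + N (\<lambda>y. (-1) * f y)"
    using bb_facts(2-4)[OF assms(1)] assms by blast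
  moreover have "N (\<lambda>y. (-1) * f y) = N f" using bb_facts(5)[OF assms(1) assms(2), of "-1"] by simp
  ultimately show ?thesis using bb_facts(6)[OF assms(1)] by simp
qed

lemma bb_swap:
  assumes "banach_bounded_fns L N" "f \<in> L" "g \<in> L"
  shows "N (\<lambda>y. g y - f y) = N (\<lambda>y. f y - g y)"
proof -
  have "N (\<lambda>y. (-1) * (f y - g y)) = N (\<lambda>y. f y - g y)"
    using bb_facts(5)[OF assms(1) bb_diff[OF assms], of "-1"] by simp
  then show ?thesis by simp
qed

lemma bb_sum:
  assumes "banach_bounded_fns L N" "finite I" "\<And>i. i \<in> I \<Longrightarrow> f i \<in> L"
  shows "(\<lambda>y. \<Sum>i\<in>I. c i * f i y) \<in> L \<and> N (\<lambda>y. \<Sum>i\<in>I. c i * f i y) \<le> (\<Sum>i\<in>I. \<bar>c i\<bar> * N (f i))"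
  using assms(2,3)
proof (induction I rule: finite_induct)
  case empty
  then show ?case using bb_facts[OF assms(1)] by simp
next
  case (insert x F)
  have m1: "(\<lambda>y. c x * f x y) \<in> L" using bb_facts(3)[OF assms(1)] insert by auto
  have IH: "(\<lambda>y. \<Sum>i\<in>F. c i * f i y) \<in> L" "N (\<lambda>y. \<Sum>i\<in>F. c i * f i y) \<le> (\<Sum>i\<in>F. \<bar>c i\<bar> * N (f i))"
    using insert by auto
  have eq: "(\<lambda>y. \<Sum>i\<in>insert x F. c i * f i y) = (\<lambda>y. c x * f x y + (\<Sum>i\<in>F. c i * f i y))"
    using insert by simp
  show ?case unfolding eq
  proof
    show "(\<lambda>y. c x * f x y + (\<Sum>i\<in>F. c i * f i y)) \<in> L" using bb_facts(2)[OF assms(1) m1 IH(1)] .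
    have "N (\<lambda>y. c x * f x y + (\<Sum>i\<in>F. c i * f i y)) \<le> N (\<lambda>y. c x * f x y) + N (\<lambda>y. \<Sum>i\<in>F. c i * f i y)"
      using bb_facts(4)[OF assms(1) m1 IH(1)] .
    also have "\<dots> \<le> \<bar>c x\<bar> * N (f x) + (\<Sum>i\<in>F. \<bar>c i\<bar> * N (f i))"
      using bb_facts(5)[OF assms(1), of "f x" "c x"] insert IH(2) by auto
    finally show "N (\<lambda>y. c x * f x y + (\<Sum>i\<in>F. c i * f i y)) \<le> (\<Sum>i\<in>insert x F. \<bar>c i\<bar> * N (f i))"
      using insert by simp
  qed
qed



lemma qc_max:
  assumes B: "banach_bounded_fns L N" and Q: "quasiconvex_on L U"
    and "finite S" "S \<noteq> {}"
  shows "(\<forall>i\<in>S. F i \<in> L) \<longrightarrow> (\<forall>i\<in>S. w i \<ge> 0) \<longrightarrow> (\<Sum>i\<in>S. w i) = 1 \<longrightarrow>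
     U (\<lambda>y. \<Sum>i\<in>S. w i * F i y) \<le> Max ((\<lambda>i. U (F i)) ` S)"
  using assms(3,4)
proof (induction S arbitrary: w rule: finite_ne_induct)
  case (singleton x)
  then show ?case by simp
next
  case (insert j S)
  show ?case
  proof (intro impI)
    assume FL: "\<forall>i\<in>insert j S. F i \<in> L" and wp: "\<forall>i\<in>insert j S. 0 \<le> w i"
      and ws: "(\<Sum>i\<in>insert j S. w i) = 1"
    have ws2: "w j + (\<Sum>i\<in>S. w i) = 1" using ws insert by simp
    have Mx: "Max ((\<lambda>i. U (F i)) ` insert j S) = max (U (F j)) (Max ((\<lambda>i. U (F i)) ` S))"
      using insert by simp
    show "U (\<lambda>y. \<Sum>i\<in>insert j S. w i * F i y) \<le> Max ((\<lambda>i. U (F i)) ` insert j S)"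
    proof (cases "w j = 1")
      case True
      then have "(\<Sum>i\<in>S. w i) = 0" using ws2 by simp
      then have "\<forall>i\<in>S. w i = 0" using sum_nonneg_eq_0_iff[of S w] insert wp by auto
      then have "(\<lambda>y. \<Sum>i\<in>insert j S. w i * F i y) = F j" using insert True by auto
      then show ?thesis using Mx by simp
    next
      case False
      have wj: "w j < 1" using False ws2 wp sum_nonneg[of S w] by auto
      define w' where "w' i = w i / (1 - w j)" for i
      have IH: "U (\<lambda>y. \<Sum>i\<in>S. w' i * F i y) \<le> Max ((\<lambda>i. U (F i)) ` S)"
        using insert.IH[of w'] FL wp ws2 wj unfolding w'_def
        by (auto simp: sum_divide_distrib[symmetric] field_simps)
      have G: "(\<lambda>y. \<Sum>i\<in>S. w' i * F i y) \<in> L" using bb_sum[OF B insert.hyps(1), of F w'] FL by auto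
      have FjL: "F j \<in> L" using FL by auto
      have l: "w j \<in> {0..1}" using wp wj by auto
      have eq: "(\<lambda>y. \<Sum>i\<in>insert j S. w i * F i y) = (\<lambda>y. w j * F j y + (1 - w j) * (\<Sum>i\<in>S. w' i * F i y))"
        using insert wj unfolding w'_def by (auto simp: sum_distrib_left)
      have "U (\<lambda>y. w j * F j y + (1 - w j) * (\<Sum>i\<in>S. w' i * F i y)) \<le> max (U (F j)) (U (\<lambda>y. \<Sum>i\<in>S. w' i * F i y))"
        using Q[unfolded quasiconvex_on_def, rule_format, OF FjL G l] by simp
      then show ?thesis unfolding eq Mx using IH by linarith
    qed
  qed
qed


lemma mult_min_pos: "(c::real) > 0 \<Longrightarrow> c * min x y = min (c*x) (c*y)" by (auto simp: min_def)

lemma phi_pos: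
  assumes "a > 0" "b > 0" "y > 0"
  shows "phi a b q y > 0"
  using assms unfolding phi_def by (auto intro!: mult_pos_pos)

lemma phi_inv_mono:
  assumes "a > 0" "b > 0" "q \<ge> 1" "0 \<le> x" "x \<le> x'"
  shows "phi_inv a b q x \<le> phi_inv a b q x'"
proof -
  have "x / a \<le> x' / a" using assms by (simp add: divide_right_mono)
  moreover have "0 \<le> x / a" using assms by simp
  ultimately have "(x/a) powr (1/2) \<le> (x'/a) powr (1/2)" "(x/a) powr (q/2) \<le> (x'/a) powr (q/2)"
    using assms by (auto intro!: powr_mono2)
  then show ?thesis unfolding phi_inv_def using assms
    by (intro max.mono; intro mult_left_mono) auto
qed




lemma phi_inv_phi:
  assumes "a > 0" "b > 0" "q \<ge> 1" "y > 0"
  shows "phi_inv a b q (phi a b q y) \<le> y"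
proof -
  define u where "u = y / (2*b)"
  have u: "u > 0" using assms unfolding u_def by simp
  have y: "y = 2 * b * u" using assms unfolding u_def by simp
  have sq: "u\<^sup>2 = u powr 2" using u by simp
  have ph0: "phi a b q y = a * min (u powr 2) (u powr (2/q))"
  proof -
    have "phi a b q y = min (a*u\<^sup>2) (a * u powr (2/q))" by (simp only: phi_def u_def)
    then show ?thesis unfolding sq by (simp only: mult_min_pos[OF assms(1)])
  qed
  have ph: "phi a b q y / a = min (u powr 2) (u powr (2/q))"
    unfolding ph0 using assms by simp
  have q2: "2/q \<le> 2" "1/q \<le> 1" "0 < q" using assms by (auto simp: divide_le_eq)
  have "max ((min (u powr 2) (u powr (2/q))) powr (1/2)) ((min (u powr 2) (u powr (2/q))) powr (q/2)) \<le> u"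
  proof (cases "u \<ge> 1")
    case True
    have "u powr (2/q) \<le> u powr 2" by (rule powr_mono[OF q2(1) True])
    then have m: "min (u powr 2) (u powr (2/q)) = u powr (2/q)" by (simp only: min_absorb2)
    have "(u powr (2/q)) powr (1/2) = u powr (1/q)" by (simp only: powr_powr) (simp add: q2)
    also have "\<dots> \<le> u powr 1" by (rule powr_mono[OF q2(2) True])
    finally have 1: "(u powr (2/q)) powr (1/2) \<le> u" using u by simp
    have "(u powr (2/q)) powr (q/2) = u powr 1" using q2(3) by (simp only: powr_powr) simp
    then show ?thesis using 1 m u by simp
  next
    case False
    have "u powr 2 \<le> u powr (2/q)" using False u by (intro powr_mono'[OF q2(1)]) auto
    then have m: "min (u powr 2) (u powr (2/q)) = u powr 2" by (simp only: min_absorb1)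
    have 1: "(u powr 2) powr (1/2) = u powr 1" by (simp only: powr_powr) simp
    have "(u powr 2) powr (q/2) = u powr q" by (simp only: powr_powr) simp
    also have "\<dots> \<le> u powr 1" using False u by (intro powr_mono'[OF assms(3)]) auto
    finally show ?thesis using 1 m u by simp
  qed
  then have "2*b * max ((phi a b q y / a) powr (1/2)) ((phi a b q y / a) powr (q/2)) \<le> 2*b*u"
    unfolding ph using assms by simp
  moreover have "phi_inv a b q (phi a b q y) = 2*b * max ((phi a b q y / a) powr (1/2)) ((phi a b q y / a) powr (q/2))"
    unfolding phi_inv_def using assms by (simp add: max_mult_distrib_left)
  ultimately show ?thesis using y by simp
qed

lemma stab_bound:
  assumes "a > 0" "b > 0" "q \<ge> 1" "x > 0" "0 \<le> r" "r < (x/a) powr (1/2)"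
  shows "b * (r + r powr q) < phi_inv a b q x"
proof -
  define y where "y = (x/a) powr (1/2)"
  have y: "y > 0" using assms unfolding y_def by simp
  have yq: "y powr q = (x/a) powr (q/2)" unfolding y_def using assms by (simp add: powr_powr)
  have "r powr q \<le> y powr q" using assms unfolding y_def by (intro powr_mono2) auto
  then have "b * (r + r powr q) < b * (y + y powr q)" using assms y_def by simp
  also have "\<dots> \<le> b * (2 * max y (y powr q))" using assms by (intro mult_left_mono) auto
  also have "\<dots> = max (2 * b * y) (2 * b * y powr q)" using assms by (simp add: max_mult_distrib_left mult_ac)
  also have "\<dots> = phi_inv a b q x" unfolding phi_inv_def yq[symmetric] y_def[symmetric] by simp
  finally show ?thesis .
qed


lemma tele_step:
  assumes "\<beta> > 0" "(t::real) \<ge> 2"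
  shows "t powr (-\<beta>-1) \<le> ((t-1) powr (-\<beta>) - t powr (-\<beta>)) / \<beta>"
proof -
  have "\<exists>z. t-1 < z \<and> z < t \<and> (t powr (-\<beta>) - (t-1) powr (-\<beta>) = (t - (t-1)) * ((-\<beta>) * z powr (-\<beta> - 1)))"
    using assms apply (intro MVT2)
    subgoal by simp
    subgoal for x using has_real_derivative_powr[of x "-\<beta>"] by simp
    done
  then obtain z where z: "t-1 < z" "z < t" "t powr (-\<beta>) - (t-1) powr (-\<beta>) = - \<beta> * z powr (-\<beta> - 1)"
    by auto
  have "t powr (-\<beta>-1) \<le> z powr (-\<beta>-1)" using z assms by (intro powr_mono2') auto
  then have "\<beta> * t powr (-\<beta>-1) \<le> \<beta> * z powr (-\<beta>-1)" using assms by (intro mult_left_mono) auto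
  then have "\<beta> * t powr (-\<beta>-1) \<le> (t-1) powr (-\<beta>) - t powr (-\<beta>)" using z(3) by linarith
  then show ?thesis using assms by (simp add: field_simps)
qed

lemma tele_sum:
  assumes "\<alpha> > 2"
  shows "(\<Sum>t\<in>{2..T}. real t powr (1 - \<alpha>)) \<le> 1 / (\<alpha> - 2)"
proof -
  define \<beta> where "\<beta> = \<alpha> - 2"
  have b: "\<beta> > 0" using assms unfolding \<beta>_def by simp
  have e: "1 - \<alpha> = -\<beta> - 1" unfolding \<beta>_def by simp
  note tele = tele_step[OF b, unfolded e[symmetric]]
  have "(\<Sum>t\<in>{2..T}. real t powr (1 - \<alpha>)) \<le> (1 - real (max T 1) powr (-\<beta>)) / \<beta>" for T
  proof (induction T)
    case 0
    then show ?case by simp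
  next
    case (Suc n)
    show ?case
    proof (cases "n = 0")
      case True
      then show ?thesis by simp
    next
      case False
      have "(\<Sum>t\<in>{2..Suc n}. real t powr (1 - \<alpha>)) = (\<Sum>t\<in>{2..n}. real t powr (1 - \<alpha>)) + real (Suc n) powr (1 - \<alpha>)"
        using False by (simp add: sum.atLeast_Suc_atMost_Suc_shift del: of_nat_Suc)
      also have "\<dots> \<le> (1 - real n powr (-\<beta>)) / \<beta> + ((real n) powr (-\<beta>) - real (Suc n) powr (-\<beta>)) / \<beta>"
      proof (rule add_mono)
        have "max n 1 = n" using False by simp
        then show "(\<Sum>t\<in>{2..n}. real t powr (1 - \<alpha>)) \<le> (1 - real n powr (-\<beta>)) / \<beta>"
          using Suc.IH by (simp only:)
        show "real (Suc n) powr (1 - \<alpha>) \<le> ((real n) powr (-\<beta>) - real (Suc n) powr (-\<beta>)) / \<beta>"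
        proof -
          have eq: "real (Suc n) - 1 = real n" by simp
          have "2 \<le> real (Suc n)" using False by simp
          from tele[OF this] show ?thesis unfolding eq .
        qed
      qed
      also have "\<dots> = (1 - real (max (Suc n) 1) powr (-\<beta>)) / \<beta>" by (simp add: diff_divide_distrib)
      finally show ?thesis .
    qed
  qed
  also have "(1 - real (max T 1) powr (-\<beta>)) / \<beta> \<le> 1 / \<beta>" using b by (simp add: divide_right_mono)
  finally show ?thesis unfolding \<beta>_def .
qed




lemma pulls_sum:
  assumes "\<forall>t\<in>{1..T}. pol t \<omega> \<in> {1..K}"
  shows "(\<Sum>i=1..K. real (pulls pol i T \<omega>)) = real T"
proof -
  have "(\<Sum>i=1..K. card {s\<in>{1..T}. pol s \<omega> = i}) = (\<Sum>i=1..K. sum (\<lambda>_. 1::nat) {s. s \<in> {1..T} \<and> pol s \<omega> = i})"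
    by simp
  also have "\<dots> = sum (\<lambda>_. 1::nat) {1..T}"
    using assms by (intro sum.group) auto
  finally have "(\<Sum>i=1..K. pulls pol i T \<omega>) = T" unfolding pulls_def by simp
  then show ?thesis by (metis of_nat_sum)
qed

lemma pulls_step:
  assumes "t \<ge> 1"
  shows "pulls pol i t \<omega> = pulls pol i (t - 1) \<omega> + (if pol t \<omega> = i then 1 else 0)"
proof -
  have eq: "{s\<in>{1..t}. pol s \<omega> = i} = {s\<in>{1..t-1}. pol s \<omega> = i} \<union> {s. s = t \<and> pol s \<omega> = i}"
    using assms by auto
  have d: "{s\<in>{1..t-1}. pol s \<omega> = i} \<inter> {s. s = t \<and> pol s \<omega> = i} = {}" by auto
  have "card ({s\<in>{1..t-1}. pol s \<omega> = i} \<union> {s. s = t \<and> pol s \<omega> = i})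
     = card {s\<in>{1..t-1}. pol s \<omega> = i} + card {s. s = t \<and> pol s \<omega> = i}"
    using d by (intro card_Un_disjoint) auto
  moreover have "{s. s = t \<and> pol s \<omega> = i} = (if pol t \<omega> = i then {t} else {})" by auto
  then have "card {s. s = t \<and> pol s \<omega> = i} = (if pol t \<omega> = i then 1 else 0)" by simp
  ultimately show ?thesis unfolding pulls_def eq by simp
qed

lemma pulls_mono:
  assumes "t \<le> t'"
  shows "pulls pol i t \<omega> \<le> pulls pol i t' \<omega>"
  unfolding pulls_def using assms by (intro card_mono) auto

lemma pulls_le:
  shows "pulls pol i t \<omega> \<le> t"
proof -
  have "pulls pol i t \<omega> \<le> card {1..t}" unfolding pulls_def by (intro card_mono) auto
  then show ?thesis by simp
qed

lemma pulls_inc: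
  assumes "1 \<le> x" "pol x \<omega> = i"
  shows "pulls pol i x \<omega> = pulls pol i (x - 1) \<omega> + 1"
  using pulls_step[OF assms(1), of pol i \<omega>] assms(2) by simp

lemma pulls_count:
  "pulls pol i T \<omega> \<le> m + card {t\<in>{1..T}. pol t \<omega> = i \<and> m \<le> pulls pol i (t - 1) \<omega>}"
proof -
  define P where "P = {t\<in>{1..T}. pol t \<omega> = i}"
  define A where "A = {t\<in>{1..T}. pol t \<omega> = i \<and> pulls pol i (t - 1) \<omega> < m}"
  define B where "B = {t\<in>{1..T}. pol t \<omega> = i \<and> m \<le> pulls pol i (t - 1) \<omega>}"
  have "P = A \<union> B" unfolding P_def A_def B_def by auto
  then have c1: "card P \<le> card A + card B" using card_Un_le[of A B] by simp
  have "inj_on (\<lambda>t. pulls pol i (t - 1) \<omega>) A"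
  proof (rule inj_onI)
    fix x y assume x: "x \<in> A" and y: "y \<in> A" and e: "pulls pol i (x - 1) \<omega> = pulls pol i (y - 1) \<omega>"
    have x1: "1 \<le> x" "pol x \<omega> = i" using x unfolding A_def by auto
    have y1: "1 \<le> y" "pol y \<omega> = i" using y unfolding A_def by auto
    show "x = y"
    proof (rule ccontr)
      assume "x \<noteq> y"
      then consider "x < y" | "y < x" by linarith
      then show False
      proof cases
        case 1
        have "pulls pol i x \<omega> \<le> pulls pol i (y - 1) \<omega>" using 1 by (intro pulls_mono) linarith
        then show False using e pulls_inc[of x pol \<omega> i, OF x1] by linarith
      next
        case 2
        have "pulls pol i y \<omega> \<le> pulls pol i (x - 1) \<omega>" using 2 by (intro pulls_mono) linarith
        then show False using e pulls_inc[of y pol \<omega> i, OF y1] by linarith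
      qed
    qed
  qed
  moreover have "(\<lambda>t. pulls pol i (t - 1) \<omega>) ` A \<subseteq> {..<m}" unfolding A_def by auto
  ultimately have "card A \<le> card {..<m}" by (intro card_inj_on_le) auto
  then have "card A \<le> m" by simp
  moreover have "pulls pol i T \<omega> = card P" unfolding pulls_def P_def by simp
  ultimately show ?thesis using c1 unfolding B_def by linarith
qed





lemma unit_simplex:
  assumes "i \<in> {1..K}"
  shows "(\<lambda>j. if j = i then 1 else 0) \<in> prob_simplex K"
  using assms unfolding prob_simplex_def by auto

lemma mix_unit:
  assumes "i \<in> {1..K}"
  shows "mix K F (\<lambda>j. if j = i then 1 else 0) = F i"
proof
  fix y
  have "(\<Sum>j=1..K. (if j = i then 1 else 0) * F j y) = (\<Sum>j\<in>{1..K}. if j = i then F j y else 0)"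
    by (rule sum.cong) auto
  also have "\<dots> = F i y" using assms by simp
  finally show "mix K F (\<lambda>j. if j = i then 1 else 0) y = F i y" unfolding mix_def .
qed

lemma arm_in_mixtures:
  assumes "i \<in> {1..K}"
  shows "F i \<in> mixtures K F"
  unfolding mixtures_def using mix_unit[OF assms, of F, symmetric] unit_simplex[OF assms] by blast

lemma emp_arm_in:
  assumes "s \<ge> 1"
  shows "emp_arm X i s \<omega> \<in> emp_cdfs"
  unfolding emp_arm_def emp_cdfs_def using assms by auto

lemma rpow_nonneg: "rpow x e \<ge> 0"
  unfolding rpow_def by auto



locale bsetup =
  fixes M :: "'a measure" and K :: nat and X :: "nat \<Rightarrow> nat \<Rightarrow> 'a \<Rightarrow> real"
    and Z :: "'a \<Rightarrow> real" and F :: "nat \<Rightarrow> real \<Rightarrow> real"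
    and L :: "(real \<Rightarrow> real) set" and N :: "(real \<Rightarrow> real) \<Rightarrow> real"
    and U :: "(real \<Rightarrow> real) \<Rightarrow> real" and a b q \<alpha> :: real
    and pstar :: "nat \<Rightarrow> real" and istar :: nat and pol :: "nat \<Rightarrow> 'a \<Rightarrow> nat" and T :: nat
  assumes model: "bandit_model M K X Z F"
    and banach: "banach_bounded_fns L N"
    and L_contains: "mixtures K F \<union> emp_cdfs \<subseteq> L"
    and qconv: "quasiconvex_on L U"
    and stable: "strongly_stable M K X F N U a b q"
    and pstar: "pstar \<in> prob_simplex K" "\<forall>p\<in>prob_simplex K. U (mix K F p) \<le> U (mix K F pstar)"
    and istar: "istar \<in> {1..K}" "\<forall>i\<in>{1..K}. gap U K F pstar istar \<le> gap U K F pstar i"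
    and gaps_pos: "\<forall>i\<in>{1..K}. i \<noteq> istar \<longrightarrow> gap U K F pstar i > 0"
    and alpha: "\<alpha> > 2"
    and admissible: "admissible_policy M K X Z pol"
    and ucb: "ucb_policy M K X U a b q \<alpha> pol"
    and T: "T \<ge> 1"
begin

lemma prms: "a > 0" "b > 0" "q \<ge> 1" "K \<ge> 1" "prob_space M"
proof -
  show "a > 0" "b > 0" "q \<ge> 1" using stable unfolding strongly_stable_def by blast+
  show "K \<ge> 1" "prob_space M" using model unfolding bandit_model_def by blast+
qed

lemma F_L: "i \<in> {1..K} \<Longrightarrow> F i \<in> L"
  using arm_in_mixtures[of i K F] L_contains by auto

lemma emp_L: "s \<ge> 1 \<Longrightarrow> emp_arm X i s \<omega> \<in> L"
  using emp_arm_in[of s X i \<omega>] L_contains by auto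

lemma D_nonneg: "i \<in> {1..K} \<Longrightarrow> j \<in> {1..K} \<Longrightarrow> N (\<lambda>y. F i y - F j y) \<ge> 0"
  using bb_nonneg[OF banach bb_diff[OF banach F_L F_L]] by auto

lemma opt_le: "U (mix K F pstar) \<le> U (F istar)"
proof -
  have fin: "finite {1..K}" "{1..K} \<noteq> {}" using prms by auto
  have "U (\<lambda>y. \<Sum>i\<in>{1..K}. pstar i * F i y) \<le> Max ((\<lambda>i. U (F i)) ` {1..K})"
  proof -
    have "\<forall>i\<in>{1..K}. F i \<in> L" using F_L by blast
    moreover have "\<forall>i\<in>{1..K}. pstar i \<ge> 0" "(\<Sum>i\<in>{1..K}. pstar i) = 1"
      using pstar(1) unfolding prob_simplex_def by auto
    ultimately show ?thesis using qc_max[OF banach qconv fin, of F pstar] by blast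
  qed
  moreover have "Max ((\<lambda>i. U (F i)) ` {1..K}) \<in> (\<lambda>i. U (F i)) ` {1..K}"
    using fin by (intro Max_in) auto
  then obtain k where k: "k \<in> {1..K}" "Max ((\<lambda>i. U (F i)) ` {1..K}) = U (F k)"
    by blast
  moreover have "U (F k) \<le> U (F istar)" using istar(2) k(1) unfolding gap_def by auto
  ultimately show ?thesis unfolding mix_def by simp
qed

lemma lip_emp:
  assumes "i \<in> {1..K}" "s \<ge> 1"
  shows "\<bar>U (F i) - U (emp_arm X i s \<omega>)\<bar> \<le>
     b * (N (\<lambda>y. emp_arm X i s \<omega> y - F i y) + N (\<lambda>y. emp_arm X i s \<omega> y - F i y) powr q)"
proof -
  have "\<bar>U (F i) - U (emp_arm X i s \<omega>)\<bar> \<le>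
     b * (N (\<lambda>y. F i y - emp_arm X i s \<omega> y) + N (\<lambda>y. F i y - emp_arm X i s \<omega> y) powr q)"
  proof -
    have st: "\<forall>F'\<in>mixtures K F. \<forall>G\<in>mixtures K F \<union> emp_cdfs.
        \<bar>U F' - U G\<bar> \<le> b * (N (\<lambda>y. F' y - G y) + N (\<lambda>y. F' y - G y) powr q)"
      using stable unfolding strongly_stable_def by blast
    show ?thesis using st[rule_format, OF arm_in_mixtures[OF assms(1), of F], of "emp_arm X i s \<omega>"]
      emp_arm_in[OF assms(2), of X i \<omega>] by blast
  qed
  moreover have "N (\<lambda>y. F i y - emp_arm X i s \<omega> y) = N (\<lambda>y. emp_arm X i s \<omega> y - F i y)"
    using bb_swap[OF banach emp_L[OF assms(2)] F_L[OF assms(1)]] by simp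
  ultimately show ?thesis by simp
qed

lemma emp_tail:
  assumes "i \<in> {1..K}" "x > 0" "t \<ge> 1"
  shows "{\<omega>\<in>space M. N (\<lambda>y. emp_arm X i t \<omega> y - F i y) \<ge> x} \<in> sets M"
    "measure M {\<omega>\<in>space M. N (\<lambda>y. emp_arm X i t \<omega> y - F i y) \<ge> x} \<le> 2 * exp (- a * real t * x\<^sup>2)"
proof -
  have st: "\<forall>i\<in>{1..K}. \<forall>x>0. \<forall>t\<ge>1.
        {\<omega>\<in>space M. N (\<lambda>y. emp_arm X i t \<omega> y - F i y) \<ge> x} \<in> sets M \<and>
        measure M {\<omega>\<in>space M. N (\<lambda>y. emp_arm X i t \<omega> y - F i y) \<ge> x}
          \<le> 2 * exp (- a * real t * x\<^sup>2)"
    using stable unfolding strongly_stable_def by blast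
  show "{\<omega>\<in>space M. N (\<lambda>y. emp_arm X i t \<omega> y - F i y) \<ge> x} \<in> sets M"
    "measure M {\<omega>\<in>space M. N (\<lambda>y. emp_arm X i t \<omega> y - F i y) \<ge> x} \<le> 2 * exp (- a * real t * x\<^sup>2)"
    using st[rule_format, OF assms] by auto
qed

lemma pol_range: "\<omega> \<in> space M \<Longrightarrow> t \<ge> 1 \<Longrightarrow> pol t \<omega> \<in> {1..K}"
  using admissible unfolding admissible_policy_def by blast

lemma pol_init: "\<omega> \<in> space M \<Longrightarrow> t \<in> {1..K} \<Longrightarrow> pol t \<omega> = t"
  using ucb unfolding ucb_policy_def by blast

lemma pol_ucb: "\<omega> \<in> space M \<Longrightarrow> t \<ge> K+1 \<Longrightarrow> j \<in> {1..K} \<Longrightarrow>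
   ucb_index U X a b q \<alpha> pol j t \<omega> \<le> ucb_index U X a b q \<alpha> pol (pol t \<omega>) t \<omega>"
  using ucb unfolding ucb_policy_def by blast

end


context bsetup begin

lemma lip_nonneg: "lip_const K F N b q \<ge> 0"
proof -
  have fin: "finite {rpow (N (\<lambda>y. F i y - F j y)) (q - 1) | i j. i \<in> {1..K} \<and> j \<in> {1..K}}"
    by (intro finite_image_set2) auto
  have "rpow (N (\<lambda>y. F 1 y - F 1 y)) (q - 1) \<in> {rpow (N (\<lambda>y. F i y - F j y)) (q - 1) | i j. i \<in> {1..K} \<and> j \<in> {1..K}}"
    using prms(4) by (intro CollectI exI[of _ 1]) auto
  then have "rpow (N (\<lambda>y. F 1 y - F 1 y)) (q - 1) \<le> Max {rpow (N (\<lambda>y. F i y - F j y)) (q - 1) | i j. i \<in> {1..K} \<and> j \<in> {1..K}}"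
    using fin by (intro Max_ge)
  then have "0 \<le> Max {rpow (N (\<lambda>y. F i y - F j y)) (q - 1) | i j. i \<in> {1..K} \<and> j \<in> {1..K}}"
    using rpow_nonneg by (meson order_trans)
  then show ?thesis unfolding lip_const_def using prms(2) by simp
qed

lemma regret_pw:
  assumes om: "\<omega> \<in> space M"
  shows "U (mix K F pstar) - U (proxy_dist K F pol T \<omega>) \<le>
    lip_const K F N b q / real T * (\<Sum>i\<in>{1..K}-{istar}. real (pulls pol i T \<omega>) * N (\<lambda>y. F istar y - F i y))"
proof -
  define c where "c i = real (pulls pol i T \<omega>) / real T" for i
  define D where "D i = N (\<lambda>y. F istar y - F i y)" for i
  define G where "G = proxy_dist K F pol T \<omega>"
  have Tpos: "real T > 0" using T by simp
  have sumc: "(\<Sum>i=1..K. c i) = 1"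
  proof -
    have "(\<Sum>i=1..K. real (pulls pol i T \<omega>)) = real T"
      using pulls_sum[of T pol \<omega> K] pol_range[OF om] by auto
    then show ?thesis unfolding c_def using Tpos by (simp add: sum_divide_distrib[symmetric])
  qed
  have cnn: "c i \<ge> 0" for i unfolding c_def by simp
  have csimp: "c \<in> prob_simplex K" unfolding prob_simplex_def using sumc cnn by auto
  have Gmix: "G = mix K F c"
    unfolding G_def proxy_dist_def mix_def c_def by (simp add: sum_divide_distrib)
  have GM: "G \<in> mixtures K F" unfolding Gmix mixtures_def using csimp by blast
  have st: "\<forall>F'\<in>mixtures K F. \<forall>G\<in>mixtures K F \<union> emp_cdfs.
        \<bar>U F' - U G\<bar> \<le> b * (N (\<lambda>y. F' y - G y) + N (\<lambda>y. F' y - G y) powr q)"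
    using stable unfolding strongly_stable_def by blast
  define r where "r = N (\<lambda>y. F istar y - G y)"
  have lip: "\<bar>U (F istar) - U G\<bar> \<le> b * (r + r powr q)"
    unfolding r_def using st[rule_format, OF arm_in_mixtures[OF istar(1), of F], of G] GM by blast
  have GL: "G \<in> L" using GM L_contains by blast
  have rnn: "r \<ge> 0" unfolding r_def using bb_nonneg[OF banach bb_diff[OF banach F_L[OF istar(1)] GL]] .
  have fL: "(\<lambda>y. F istar y - F i y) \<in> L" if "i \<in> {1..K}" for i
    using bb_diff[OF banach F_L[OF istar(1)] F_L[OF that]] .
  have eqG: "(\<lambda>y. F istar y - G y) = (\<lambda>y. \<Sum>i\<in>{1..K}. c i * (F istar y - F i y))"
  proof
    fix y
    have e1: "(\<Sum>i\<in>{1..K}. c i * (F istar y - F i y)) = (\<Sum>i\<in>{1..K}. c i * F istar y) - (\<Sum>i\<in>{1..K}. c i * F i y)"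
      by (simp add: right_diff_distrib sum_subtractf)
    have e2: "(\<Sum>i\<in>{1..K}. c i * F istar y) = (\<Sum>i\<in>{1..K}. c i) * F istar y"
      by (simp add: sum_distrib_right)
    have e3: "(\<Sum>i\<in>{1..K}. c i * F i y) = G y" unfolding Gmix mix_def by simp
    show "F istar y - G y = (\<Sum>i\<in>{1..K}. c i * (F istar y - F i y))" using e1 e2 e3 sumc by simp
  qed
  have r1: "r \<le> (\<Sum>i\<in>{1..K}. c i * D i)"
  proof -
    have "r \<le> (\<Sum>i\<in>{1..K}. \<bar>c i\<bar> * N (\<lambda>y. F istar y - F i y))"
      unfolding r_def eqG using bb_sum[OF banach, of "{1..K}" "\<lambda>i y. F istar y - F i y" c] fL by auto
    then show ?thesis unfolding D_def using cnn by simp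
  qed
  have Dstar: "D istar = 0" unfolding D_def using bb_facts(6)[OF banach] by simp
  have r2: "(\<Sum>i\<in>{1..K}. c i * D i) = (\<Sum>i\<in>{1..K}-{istar}. c i * D i)"
    using sum.remove[of "{1..K}" istar "\<lambda>i. c i * D i"] istar(1) Dstar by simp
  define Mq where "Mq = Max {rpow (N (\<lambda>y. F i y - F j y)) (q - 1) | i j. i \<in> {1..K} \<and> j \<in> {1..K}}"
  have finM: "finite {rpow (N (\<lambda>y. F i y - F j y)) (q - 1) | i j. i \<in> {1..K} \<and> j \<in> {1..K}}"
    by (intro finite_image_set2) auto
  have finK: "finite {1..K}" "{1..K} \<noteq> {}" using prms by auto
  have "Max (D ` {1..K}) \<in> D ` {1..K}" using finK by (intro Max_in) auto
  then obtain k where k: "k \<in> {1..K}" "Max (D ` {1..K}) = D k" by blast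
  have Dk: "D i \<le> D k" if "i \<in> {1..K}" for i using that k finK by (metis Max_ge finite_imageI imageI)
  have rDk: "r \<le> D k"
  proof -
    have "(\<Sum>i\<in>{1..K}. c i * D i) \<le> (\<Sum>i\<in>{1..K}. c i * D k)"
      using Dk cnn by (intro sum_mono mult_left_mono) auto
    also have "\<dots> = D k" using sumc by (simp add: sum_distrib_right[symmetric])
    finally show ?thesis using r1 by simp
  qed
  have rMq: "rpow (D k) (q - 1) \<le> Mq"
  proof -
    have "rpow (D k) (q - 1) \<in> {rpow (N (\<lambda>y. F i y - F j y)) (q - 1) | i j. i \<in> {1..K} \<and> j \<in> {1..K}}"
      unfolding D_def using istar(1) k(1) by blast
    then show ?thesis unfolding Mq_def using finM by (intro Max_ge)
  qed
  have rq: "r powr q \<le> r * Mq"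
  proof (cases "r = 0")
    case True
    then show ?thesis using rMq rpow_nonneg[of "D k" "q - 1"] by simp
  next
    case False
    then have rp: "r > 0" using rnn by simp
    have "r powr q = r powr 1 * r powr (q - 1)" using powr_add[of r 1 "q - 1"] by simp
    also have "\<dots> = r * r powr (q - 1)" using rp by simp
    also have "r powr (q - 1) \<le> rpow (D k) (q - 1)"
    proof (cases "q = 1")
      case True
      then show ?thesis unfolding rpow_def using rp by simp
    next
      case False
      then have "q - 1 \<noteq> 0" by simp
      then have "rpow (D k) (q - 1) = D k powr (q - 1)" unfolding rpow_def by simp
      moreover have "r powr (q - 1) \<le> D k powr (q - 1)" using rDk rnn prms(3) by (intro powr_mono2) auto
      ultimately show ?thesis by simp
    qed
    then have "r * r powr (q - 1) \<le> r * Mq" using rMq rp by (intro mult_left_mono) auto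
    finally show ?thesis by simp
  qed
  have "U (mix K F pstar) - U G \<le> U (F istar) - U G" using opt_le by simp
  also have "\<dots> \<le> b * (r + r powr q)" using lip by simp
  also have "\<dots> \<le> b * (r + r * Mq)" using rq prms(2) by simp
  also have "\<dots> = lip_const K F N b q * r" unfolding lip_const_def Mq_def by (simp add: algebra_simps)
  also have "\<dots> \<le> lip_const K F N b q * (\<Sum>i\<in>{1..K}-{istar}. c i * D i)"
    using r1 r2 lip_nonneg by (intro mult_left_mono) auto
  also have "\<dots> = lip_const K F N b q / real T * (\<Sum>i\<in>{1..K}-{istar}. real (pulls pol i T \<omega>) * D i)"
    unfolding c_def by (simp add: sum_divide_distrib[symmetric])
  finally show ?thesis unfolding G_def D_def .
qed

end


definition ythr :: "real \<Rightarrow> real \<Rightarrow> nat \<Rightarrow> nat \<Rightarrow> real" where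
  "ythr a \<alpha> t s = (\<alpha> * ln (real t) / real s / a) powr (1/2)"

definition badset :: "'a measure \<Rightarrow> (nat \<Rightarrow> nat \<Rightarrow> 'a \<Rightarrow> real) \<Rightarrow> (nat \<Rightarrow> real \<Rightarrow> real) \<Rightarrow> ((real \<Rightarrow> real) \<Rightarrow> real)
   \<Rightarrow> real \<Rightarrow> real \<Rightarrow> nat \<Rightarrow> nat \<Rightarrow> nat \<Rightarrow> 'a set" where
  "badset M X F N a \<alpha> j t s = {\<omega>\<in>space M. N (\<lambda>y. emp_arm X j s \<omega> y - F j y) \<ge> ythr a \<alpha> t s}"

definition mcnt :: "real \<Rightarrow> real \<Rightarrow> real \<Rightarrow> real \<Rightarrow> nat \<Rightarrow> real \<Rightarrow> nat" where
  "mcnt a b q \<alpha> T g = nat \<lfloor>\<alpha> * ln (real T) / phi a b q (g / 2)\<rfloor> + 1"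

lemma mcnt_ge: "real (mcnt a b q \<alpha> T g) \<ge> \<alpha> * ln (real T) / phi a b q (g / 2)"
proof -
  let ?v = "\<alpha> * ln (real T) / phi a b q (g / 2)"
  have "?v < real_of_int \<lfloor>?v\<rfloor> + 1" by linarith
  also have "real_of_int \<lfloor>?v\<rfloor> \<le> real (nat \<lfloor>?v\<rfloor>)" by simp
  finally show ?thesis unfolding mcnt_def by simp
qed

lemma mcnt_le: "\<alpha> * ln (real T) / phi a b q (g / 2) \<ge> 0 \<Longrightarrow>
   real (mcnt a b q \<alpha> T g) \<le> \<alpha> * ln (real T) / phi a b q (g / 2) + 1"
  unfolding mcnt_def by linarith

context bsetup begin

lemma bad_event:
  assumes om: "\<omega> \<in> space M" and i: "i \<in> {1..K}" "i \<noteq> istar"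
    and t: "K + 1 \<le> t" "t \<le> T" and pt: "pol t \<omega> = i"
    and mle: "mcnt a b q \<alpha> T (gap U K F pstar i) \<le> pulls pol i (t - 1) \<omega>"
  shows "\<omega> \<in> badset M X F N a \<alpha> istar t (pulls pol istar (t - 1) \<omega>) \<or>
         \<omega> \<in> badset M X F N a \<alpha> i t (pulls pol i (t - 1) \<omega>)"
proof (rule ccontr)
  assume nb: "\<not> ?thesis"
  define s where "s = pulls pol i (t - 1) \<omega>"
  define s' where "s' = pulls pol istar (t - 1) \<omega>"
  define g where "g = gap U K F pstar i"
  define m where "m = mcnt a b q \<alpha> T g"
  have gpos: "g > 0" unfolding g_def using gaps_pos i by auto
  have phpos: "phi a b q (g/2) > 0" using phi_pos[OF prms(1,2)] gpos by simp
  have m1: "m \<ge> 1" unfolding m_def mcnt_def by simp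
  have s1: "s \<ge> 1" using mle m1 unfolding s_def m_def g_def by simp
  have s'1: "s' \<ge> 1"
  proof -
    have is1: "1 \<le> istar" "pol istar \<omega> = istar" using istar(1) pol_init[OF om istar(1)] by auto
    have "pulls pol istar istar \<omega> = pulls pol istar (istar - 1) \<omega> + 1" using pulls_inc[of istar pol \<omega> istar, OF is1] .
    moreover have "pulls pol istar istar \<omega> \<le> s'" unfolding s'_def using istar(1) t by (intro pulls_mono) auto
    ultimately show ?thesis by simp
  qed
  have t2: "real t \<ge> 2" using t prms(4) by simp
  have lnt: "ln (real t) > 0" using t2 by simp
  define x where "x = \<alpha> * ln (real t) / real s"
  define x' where "x' = \<alpha> * ln (real t) / real s'"
  have xpos: "x > 0" "x' > 0" unfolding x_def x'_def using alpha lnt s1 s'1 by auto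
  define r where "r = N (\<lambda>y. emp_arm X i s \<omega> y - F i y)"
  define r' where "r' = N (\<lambda>y. emp_arm X istar s' \<omega> y - F istar y)"
  have rnn: "r \<ge> 0" "r' \<ge> 0" unfolding r_def r'_def
    using bb_nonneg[OF banach bb_diff[OF banach emp_L[OF s1] F_L[OF i(1)]]]
      bb_nonneg[OF banach bb_diff[OF banach emp_L[OF s'1] F_L[OF istar(1)]]] by auto
  have rlt: "r < (x/a) powr (1/2)" "r' < (x'/a) powr (1/2)"
    using nb om unfolding badset_def ythr_def r_def r'_def x_def x'_def s_def s'_def by auto
  have c1: "\<bar>U (F i) - U (emp_arm X i s \<omega>)\<bar> < phi_inv a b q x"
    using lip_emp[OF i(1) s1, of \<omega>] stab_bound[OF prms(1,2,3) xpos(1) rnn(1) rlt(1)] unfolding r_def by linarith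
  have c2: "\<bar>U (F istar) - U (emp_arm X istar s' \<omega>)\<bar> < phi_inv a b q x'"
    using lip_emp[OF istar(1) s'1, of \<omega>] stab_bound[OF prms(1,2,3) xpos(2) rnn(2) rlt(2)] unfolding r'_def by linarith
  have "ucb_index U X a b q \<alpha> pol istar t \<omega> \<le> ucb_index U X a b q \<alpha> pol (pol t \<omega>) t \<omega>"
    using pol_ucb[OF om t(1) istar(1)] .
  then have uc: "U (emp_arm X istar s' \<omega>) + phi_inv a b q x' \<le> U (emp_arm X i s \<omega>) + phi_inv a b q x"
    unfolding ucb_index_def pt s_def s'_def x_def x'_def by simp
  have lt: "g < 2 * phi_inv a b q x"
    using c1 c2 uc opt_le unfolding g_def gap_def by linarith
  have "x \<le> \<alpha> * ln (real T) / real s"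
    unfolding x_def using alpha t lnt s1 by (intro divide_right_mono mult_left_mono) auto
  also have "\<dots> \<le> \<alpha> * ln (real T) / real m"
    using alpha t T m1 mle unfolding s_def m_def g_def by (intro divide_left_mono mult_nonneg_nonneg) auto
  also have "\<dots> \<le> phi a b q (g/2)"
  proof -
    have "\<alpha> * ln (real T) / phi a b q (g / 2) \<le> real m" unfolding m_def using mcnt_ge .
    then have "\<alpha> * ln (real T) \<le> real m * phi a b q (g/2)" using phpos by (simp add: divide_le_eq)
    then show ?thesis using m1 by (simp add: divide_le_eq mult.commute)
  qed
  finally have "phi_inv a b q x \<le> phi_inv a b q (phi a b q (g/2))"
    using xpos by (intro phi_inv_mono[OF prms(1,2,3)]) auto
  also have "\<dots> \<le> g/2" using phi_inv_phi[OF prms(1,2,3), of "g/2"] gpos by simp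
  finally show False using lt by simp
qed

end


context bsetup begin

lemma pulls_pos:
  assumes om: "\<omega> \<in> space M" and j: "j \<in> {1..K}" and t: "K + 1 \<le> t"
  shows "pulls pol j (t - 1) \<omega> \<ge> 1"
proof -
  have j1: "1 \<le> j" "pol j \<omega> = j" using j pol_init[OF om j] by auto
  have "pulls pol j j \<omega> = pulls pol j (j - 1) \<omega> + 1" using pulls_inc[of j pol \<omega> j, OF j1] .
  moreover have "pulls pol j j \<omega> \<le> pulls pol j (t - 1) \<omega>" using j t by (intro pulls_mono) auto
  ultimately show ?thesis by simp
qed

lemma pulls_zero_init:
  assumes om: "\<omega> \<in> space M" and i: "i \<in> {1..K}"
  shows "pulls pol i (i - 1) \<omega> = 0"
proof -
  have "\<forall>s\<in>{1..i-1}. pol s \<omega> \<noteq> i"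
  proof
    fix s assume s: "s \<in> {1..i-1}"
    then have "s \<in> {1..K}" "s < i" using i by auto
    then show "pol s \<omega> \<noteq> i" using pol_init[OF om] by auto
  qed
  then have "{s\<in>{1..i-1}. pol s \<omega> = i} = {}" by auto
  then show ?thesis unfolding pulls_def by simp
qed

lemma count_pw:
  assumes om: "\<omega> \<in> space M" and i: "i \<in> {1..K}" "i \<noteq> istar"
  shows "real (pulls pol i T \<omega>) \<le> real (mcnt a b q \<alpha> T (gap U K F pstar i)) +
    (\<Sum>t\<in>{K+1..T}. \<Sum>s\<in>{1..t-1}. indicator (badset M X F N a \<alpha> istar t s) \<omega>
                                  + indicator (badset M X F N a \<alpha> i t s) \<omega>)"
proof -
  define m where "m = mcnt a b q \<alpha> T (gap U K F pstar i)"
  define Bs where "Bs = {t\<in>{1..T}. pol t \<omega> = i \<and> m \<le> pulls pol i (t - 1) \<omega>}"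
  define W where "W = {t\<in>{K+1..T}. \<exists>s\<in>{1..t-1}. \<omega> \<in> badset M X F N a \<alpha> istar t s \<or> \<omega> \<in> badset M X F N a \<alpha> i t s}"
  define h where "h t = (\<Sum>s\<in>{1..t-1}. indicator (badset M X F N a \<alpha> istar t s) \<omega>
                                  + (indicator (badset M X F N a \<alpha> i t s) \<omega> :: real))" for t
  have m1: "m \<ge> 1" unfolding m_def mcnt_def by simp
  have c1: "pulls pol i T \<omega> \<le> m + card Bs" unfolding Bs_def using pulls_count .
  have sub: "Bs \<subseteq> W"
  proof
    fix t assume tB: "t \<in> Bs"
    have t1: "1 \<le> t" "t \<le> T" "pol t \<omega> = i" "m \<le> pulls pol i (t - 1) \<omega>" using tB unfolding Bs_def by auto
    have tK: "K + 1 \<le> t"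
    proof (rule ccontr)
      assume "\<not> K + 1 \<le> t"
      then have "t \<in> {1..K}" using t1 by auto
      then have "t = i" using pol_init[OF om] t1 by auto
      then show False using pulls_zero_init[OF om i(1)] t1 m1 by simp
    qed
    have "\<omega> \<in> badset M X F N a \<alpha> istar t (pulls pol istar (t - 1) \<omega>) \<or>
         \<omega> \<in> badset M X F N a \<alpha> i t (pulls pol i (t - 1) \<omega>)"
      using bad_event[OF om i tK t1(2) t1(3)] t1(4) unfolding m_def by blast
    moreover have mem: "pulls pol istar (t - 1) \<omega> \<in> {1..t-1}" "pulls pol i (t - 1) \<omega> \<in> {1..t-1}"
      using pulls_pos[OF om istar(1) tK] pulls_pos[OF om i(1) tK] pulls_le[of pol istar "t-1" \<omega>]
        pulls_le[of pol i "t-1" \<omega>] by auto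
    ultimately have ex: "\<exists>s\<in>{1..t-1}. \<omega> \<in> badset M X F N a \<alpha> istar t s \<or> \<omega> \<in> badset M X F N a \<alpha> i t s"
      by blast
    show "t \<in> W" unfolding W_def using ex tK t1(2) by simp
  qed
  have c2: "card Bs \<le> card W" using sub unfolding W_def by (intro card_mono) auto
  have hnn: "h t \<ge> 0" for t unfolding h_def by (intro sum_nonneg) auto
  have h1: "h t \<ge> 1" if tW: "t \<in> W" for t
  proof -
    obtain s where s: "s \<in> {1..t-1}" "\<omega> \<in> badset M X F N a \<alpha> istar t s \<or> \<omega> \<in> badset M X F N a \<alpha> i t s"
      using tW unfolding W_def by blast
    have "1 \<le> indicator (badset M X F N a \<alpha> istar t s) \<omega> + (indicator (badset M X F N a \<alpha> i t s) \<omega> :: real)"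
      using s(2) by (auto simp: indicator_def)
    also have "\<dots> \<le> h t" unfolding h_def using s(1)
      by (intro member_le_sum[where f = "\<lambda>s. indicator (badset M X F N a \<alpha> istar t s) \<omega> + (indicator (badset M X F N a \<alpha> i t s) \<omega> :: real)"]) auto
    finally show ?thesis .
  qed
  have "real (card W) = (\<Sum>t\<in>W. 1)" by simp
  also have "\<dots> \<le> (\<Sum>t\<in>W. h t)" using h1 by (intro sum_mono) auto
  also have "\<dots> \<le> (\<Sum>t\<in>{K+1..T}. h t)" using hnn unfolding W_def by (intro sum_mono2) auto
  finally have "real (card W) \<le> (\<Sum>t\<in>{K+1..T}. h t)" .
  then have "real (pulls pol i T \<omega>) \<le> real m + (\<Sum>t\<in>{K+1..T}. h t)" using c1 c2
    by (metis (mono_tags, opaque_lifting) add_le_cancel_left of_nat_add of_nat_le_iff order_trans)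
  then show ?thesis unfolding h_def m_def by simp
qed

lemma bad_meas:
  assumes j: "j \<in> {1..K}" and t: "t \<ge> 2" and s: "s \<ge> 1"
  shows "badset M X F N a \<alpha> j t s \<in> sets M"
    "measure M (badset M X F N a \<alpha> j t s) \<le> 2 * real t powr (- \<alpha>)"
proof -
  define z where "z = \<alpha> * ln (real t) / real s / a"
  have lnt: "ln (real t) > 0" using t by simp
  have zpos: "z > 0" unfolding z_def using alpha lnt s prms(1) by auto
  have ypos: "ythr a \<alpha> t s > 0" unfolding ythr_def z_def[symmetric] using zpos by simp
  show "badset M X F N a \<alpha> j t s \<in> sets M" unfolding badset_def using emp_tail(1)[OF j ypos s] .
  have "(ythr a \<alpha> t s)\<^sup>2 = z" unfolding ythr_def z_def[symmetric] using zpos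
    by (simp add: powr_half_sqrt)
  then have "a * real s * (ythr a \<alpha> t s)\<^sup>2 = \<alpha> * ln (real t)"
    unfolding z_def using prms(1) s by simp
  then have "exp (- a * real s * (ythr a \<alpha> t s)\<^sup>2) = real t powr (- \<alpha>)"
    using t by (simp add: powr_def)
  then show "measure M (badset M X F N a \<alpha> j t s) \<le> 2 * real t powr (- \<alpha>)"
    unfolding badset_def using emp_tail(2)[OF j ypos s] by simp
qed

end


context bsetup begin

lemma int_ind:
  assumes j: "j \<in> {1..K}" and t: "t \<ge> 2" and s: "s \<ge> 1"
  shows "integrable M (\<lambda>\<omega>. indicator (badset M X F N a \<alpha> j t s) \<omega> :: real)"
    "integral\<^sup>L M (\<lambda>\<omega>. indicator (badset M X F N a \<alpha> j t s) \<omega> :: real) = measure M (badset M X F N a \<alpha> j t s)"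
proof -
  interpret P: prob_space M by (rule prms(5))
  have sub: "badset M X F N a \<alpha> j t s \<inter> space M = badset M X F N a \<alpha> j t s" unfolding badset_def by auto
  show "integrable M (\<lambda>\<omega>. indicator (badset M X F N a \<alpha> j t s) \<omega> :: real)"
    unfolding integrable_indicator_iff sub using bad_meas(1)[OF j t s] by (simp add: less_top[symmetric])
  show "integral\<^sup>L M (\<lambda>\<omega>. indicator (badset M X F N a \<alpha> j t s) \<omega> :: real) = measure M (badset M X F N a \<alpha> j t s)"
    using Bochner_Integration.integral_indicator[where M=M and A="badset M X F N a \<alpha> j t s"] sub by simp
qed

lemma int_h:
  assumes i: "i \<in> {1..K}" "i \<noteq> istar"
  defines "h \<equiv> \<lambda>\<omega>. real (mcnt a b q \<alpha> T (gap U K F pstar i)) +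
    (\<Sum>t\<in>{K+1..T}. \<Sum>s\<in>{1..t-1}. indicator (badset M X F N a \<alpha> istar t s) \<omega>
                                  + indicator (badset M X F N a \<alpha> i t s) \<omega>)"
  shows "integrable M h"
    "integral\<^sup>L M h \<le> \<alpha> * ln (real T) / phi a b q (gap U K F pstar i / 2) + (\<alpha> + 6) / (\<alpha> - 2)"
proof -
  interpret P: prob_space M by (rule prms(5))
  define m where "m = mcnt a b q \<alpha> T (gap U K F pstar i)"
  define f where "f t s \<omega> = (indicator (badset M X F N a \<alpha> istar t s) \<omega> + indicator (badset M X F N a \<alpha> i t s) \<omega> :: real)" for t s \<omega>
  have hdef: "h = (\<lambda>\<omega>. real m + (\<Sum>t\<in>{K+1..T}. \<Sum>s\<in>{1..t-1}. f t s \<omega>))" unfolding h_def m_def f_def by simp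
  have ts: "t \<ge> 2" "s \<ge> 1" if "t \<in> {K+1..T}" "s \<in> {1..t-1}" for t s using that prms(4) by auto
  have intf: "integrable M (f t s)" if "t \<in> {K+1..T}" "s \<in> {1..t-1}" for t s
    unfolding f_def using Bochner_Integration.integrable_add[OF int_ind(1)[OF istar(1) ts[OF that]] int_ind(1)[OF i(1) ts[OF that]]] by simp
  have intf2: "integral\<^sup>L M (f t s) \<le> 4 * real t powr (- \<alpha>)" if "t \<in> {K+1..T}" "s \<in> {1..t-1}" for t s
  proof -
    have "integral\<^sup>L M (f t s) = measure M (badset M X F N a \<alpha> istar t s) + measure M (badset M X F N a \<alpha> i t s)"
      unfolding f_def using int_ind[OF istar(1) ts[OF that]] int_ind[OF i(1) ts[OF that]] by simp
    then show ?thesis using bad_meas(2)[OF istar(1) ts[OF that]] bad_meas(2)[OF i(1) ts[OF that]] by simp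
  qed
  have intS: "integrable M (\<lambda>\<omega>. \<Sum>s\<in>{1..t-1}. f t s \<omega>)" if "t \<in> {K+1..T}" for t
    using intf[OF that] by (intro Bochner_Integration.integrable_sum) auto
  have intSS: "integrable M (\<lambda>\<omega>. \<Sum>t\<in>{K+1..T}. \<Sum>s\<in>{1..t-1}. f t s \<omega>)"
    using intS intf by (intro Bochner_Integration.integrable_sum) auto
  show "integrable M h" unfolding hdef using intSS by (intro Bochner_Integration.integrable_add) auto
  have "integral\<^sup>L M h = real m + integral\<^sup>L M (\<lambda>\<omega>. \<Sum>t\<in>{K+1..T}. \<Sum>s\<in>{1..t-1}. f t s \<omega>)"
    unfolding hdef using intSS by (simp add: P.prob_space)
  also have "integral\<^sup>L M (\<lambda>\<omega>. \<Sum>t\<in>{K+1..T}. \<Sum>s\<in>{1..t-1}. f t s \<omega>)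
      = (\<Sum>t\<in>{K+1..T}. integral\<^sup>L M (\<lambda>\<omega>. \<Sum>s\<in>{1..t-1}. f t s \<omega>))"
    using intS by (intro Bochner_Integration.integral_sum) auto
  also have "\<dots> = (\<Sum>t\<in>{K+1..T}. \<Sum>s\<in>{1..t-1}. integral\<^sup>L M (f t s))"
    using intf by (intro sum.cong refl Bochner_Integration.integral_sum) auto
  also have "\<dots> \<le> (\<Sum>t\<in>{K+1..T}. \<Sum>s\<in>{1..t-1}. 4 * real t powr (- \<alpha>))"
    using intf2 by (intro sum_mono) auto
  also have "\<dots> \<le> (\<Sum>t\<in>{K+1..T}. 4 * real t powr (1 - \<alpha>))"
  proof (intro sum_mono)
    fix t assume t: "t \<in> {K+1..T}"
    have "(\<Sum>s\<in>{1..t-1}. 4 * real t powr (- \<alpha>)) = real (t - 1) * (4 * real t powr (- \<alpha>))" by simp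
    also have "\<dots> \<le> real t * (4 * real t powr (- \<alpha>))" by (intro mult_right_mono) auto
    also have "\<dots> = 4 * real t powr (1 - \<alpha>)"
      using powr_add[of "real t" 1 "- \<alpha>"] t prms(4) by simp
    finally show "(\<Sum>s\<in>{1..t-1}. 4 * real t powr (- \<alpha>)) \<le> 4 * real t powr (1 - \<alpha>)" .
  qed
  also have "\<dots> \<le> (\<Sum>t\<in>{2..T}. 4 * real t powr (1 - \<alpha>))"
    using prms(4) by (intro sum_mono2) auto
  also have "\<dots> = 4 * (\<Sum>t\<in>{2..T}. real t powr (1 - \<alpha>))" by (simp add: sum_distrib_left)
  also have "\<dots> \<le> 4 * (1 / (\<alpha> - 2))" using tele_sum[OF alpha, of T] by simp
  finally have i1: "integral\<^sup>L M h \<le> real m + 4 / (\<alpha> - 2)" by simp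
  have gpos: "gap U K F pstar i > 0" using gaps_pos i by auto
  have phpos: "phi a b q (gap U K F pstar i / 2) > 0" using phi_pos[OF prms(1,2)] gpos by simp
  have "\<alpha> * ln (real T) / phi a b q (gap U K F pstar i / 2) \<ge> 0" using alpha T phpos by simp
  then have "real m \<le> \<alpha> * ln (real T) / phi a b q (gap U K F pstar i / 2) + 1" unfolding m_def by (rule mcnt_le)
  moreover have "1 + 4 / (\<alpha> - 2) \<le> (\<alpha> + 6) / (\<alpha> - 2)" using alpha by (simp add: field_simps)
  ultimately show "integral\<^sup>L M h \<le> \<alpha> * ln (real T) / phi a b q (gap U K F pstar i / 2) + (\<alpha> + 6) / (\<alpha> - 2)"
    using i1 by linarith
qed

end


theorem theorem7:
  fixes M :: "'a measure" and K :: nat and X :: "nat \<Rightarrow> nat \<Rightarrow> 'a \<Rightarrow> real"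
    and Z :: "'a \<Rightarrow> real" and F :: "nat \<Rightarrow> real \<Rightarrow> real"
    and L :: "(real \<Rightarrow> real) set" and N :: "(real \<Rightarrow> real) \<Rightarrow> real"
    and U :: "(real \<Rightarrow> real) \<Rightarrow> real" and a b q \<alpha> :: real
    and pstar :: "nat \<Rightarrow> real" and istar :: nat and pol :: "nat \<Rightarrow> 'a \<Rightarrow> nat" and T :: nat
  assumes model: "bandit_model M K X Z F"
    and banach: "banach_bounded_fns L N"
    and L_contains: "mixtures K F \<union> emp_cdfs \<subseteq> L"
    and qconv: "quasiconvex_on L U"
    and stable: "strongly_stable M K X F N U a b q"
    and pstar: "pstar \<in> prob_simplex K" "\<forall>p\<in>prob_simplex K. U (mix K F p) \<le> U (mix K F pstar)"
    and istar: "istar \<in> {1..K}" "\<forall>i\<in>{1..K}. gap U K F pstar istar \<le> gap U K F pstar i"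
    and gaps_pos: "\<forall>i\<in>{1..K}. i \<noteq> istar \<longrightarrow> gap U K F pstar i > 0"
    and alpha: "\<alpha> > 2"
    and admissible: "admissible_policy M K X Z pol"
    and ucb: "ucb_policy M K X U a b q \<alpha> pol"
    and T: "T \<ge> 1"
  shows "proxy_regret M K F U pstar pol T
     \<le> lip_const K F N b q / real T *
        (\<Sum>i\<in>{1..K} - {istar}.
           (\<alpha> * ln (real T) / phi a b q (gap U K F pstar i / 2) + (\<alpha> + 6) / (\<alpha> - 2))
           * N (\<lambda>y. F istar y - F i y))"
proof -
  interpret B: bsetup M K X Z F L N U a b q \<alpha> pstar istar pol T
    unfolding bsetup_def using assms by blast
  interpret P: prob_space M by (rule B.prms(5))
  define I' where "I' = {1..K} - {istar}"
  define D where "D i = N (\<lambda>y. F istar y - F i y)" for i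
  define h where "h i \<omega> = real (mcnt a b q \<alpha> T (gap U K F pstar i)) +
    (\<Sum>t\<in>{K+1..T}. \<Sum>s\<in>{1..t-1}. indicator (badset M X F N a \<alpha> istar t s) \<omega>
                                  + (indicator (badset M X F N a \<alpha> i t s) \<omega> :: real))" for i \<omega>
  define lc where "lc = lip_const K F N b q / real T"
  define C where "C i = \<alpha> * ln (real T) / phi a b q (gap U K F pstar i / 2) + (\<alpha> + 6) / (\<alpha> - 2)" for i
  define g where "g \<omega> = U (mix K F pstar) - U (proxy_dist K F pol T \<omega>)" for \<omega>
  define H where "H \<omega> = lc * (\<Sum>i\<in>I'. D i * h i \<omega>)" for \<omega>
  have lcnn: "lc \<ge> 0" unfolding lc_def using B.lip_nonneg by simp
  have Dnn: "D i \<ge> 0" if "i \<in> I'" for i unfolding D_def using B.D_nonneg[OF istar(1)] that unfolding I'_def by auto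
  have Cnn: "C i \<ge> 0" if "i \<in> I'" for i
  proof -
    have "gap U K F pstar i > 0" using gaps_pos that unfolding I'_def by auto
    then have "phi a b q (gap U K F pstar i / 2) > 0" using phi_pos[OF B.prms(1,2)] by simp
    moreover have "ln (real T) \<ge> 0" using T by simp
    ultimately show ?thesis unfolding C_def using alpha by simp
  qed
  have hint: "integrable M (h i)" "integral\<^sup>L M (h i) \<le> C i" if "i \<in> I'" for i
    using B.int_h[of i] that unfolding I'_def h_def C_def by auto
  have pw: "g \<omega> \<le> H \<omega>" if om: "\<omega> \<in> space M" for \<omega>
  proof -
    have "g \<omega> \<le> lc * (\<Sum>i\<in>I'. real (pulls pol i T \<omega>) * D i)"
      unfolding g_def lc_def I'_def D_def using B.regret_pw[OF om] by simp
    also have "\<dots> \<le> H \<omega>" unfolding H_def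
    proof (intro mult_left_mono[OF _ lcnn] sum_mono)
      fix i assume i: "i \<in> I'"
      have "real (pulls pol i T \<omega>) \<le> h i \<omega>"
        unfolding h_def using B.count_pw[OF om, of i] i unfolding I'_def by auto
      then show "real (pulls pol i T \<omega>) * D i \<le> D i * h i \<omega>" using Dnn[OF i] by (simp add: mult.commute mult_left_mono)
    qed
    finally show ?thesis .
  qed
  have target_nn: "0 \<le> lc * (\<Sum>i\<in>I'. C i * D i)"
    using lcnn Cnn Dnn by (intro mult_nonneg_nonneg sum_nonneg) auto
  have intH: "integrable M H" unfolding H_def using hint(1)
    by (intro Bochner_Integration.integrable_sum integrable_mult_right) auto
  have "integral\<^sup>L M H = lc * (\<Sum>i\<in>I'. D i * integral\<^sup>L M (h i))"
  proof -
    have "integral\<^sup>L M H = lc * integral\<^sup>L M (\<lambda>\<omega>. \<Sum>i\<in>I'. D i * h i \<omega>)" unfolding H_def by simp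
    also have "integral\<^sup>L M (\<lambda>\<omega>. \<Sum>i\<in>I'. D i * h i \<omega>) = (\<Sum>i\<in>I'. integral\<^sup>L M (\<lambda>\<omega>. D i * h i \<omega>))"
      using hint(1) by (intro Bochner_Integration.integral_sum integrable_mult_right) auto
    also have "\<dots> = (\<Sum>i\<in>I'. D i * integral\<^sup>L M (h i))" by simp
    finally show ?thesis .
  qed
  also have "\<dots> \<le> lc * (\<Sum>i\<in>I'. C i * D i)"
  proof (intro mult_left_mono[OF _ lcnn] sum_mono)
    fix i assume i: "i \<in> I'"
    show "D i * integral\<^sup>L M (h i) \<le> C i * D i"
      using mult_left_mono[OF hint(2)[OF i] Dnn[OF i]] by (simp add: mult.commute)
  qed
  finally have HI: "integral\<^sup>L M H \<le> lc * (\<Sum>i\<in>I'. C i * D i)" .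
  have "proxy_regret M K F U pstar pol T \<le> lc * (\<Sum>i\<in>I'. C i * D i)"
  proof (cases "integrable M g")
    case True
    have "integral\<^sup>L M g \<le> integral\<^sup>L M H" using True intH pw by (intro integral_mono) auto
    then show ?thesis unfolding proxy_regret_def g_def[symmetric] using HI by simp
  next
    case False
    then show ?thesis unfolding proxy_regret_def g_def[symmetric] using target_nn
      by (simp add: not_integrable_integral_eq)
  qed
  then show ?thesis unfolding lc_def I'_def C_def D_def .
qed


end
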